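(* Let $K\ge1$ and let $\theta_1,\dots,\theta_K$ be unknown parameters with $\theta_i\in\Theta_i$. Data $\mathbf X=(X_1,\dots,X_K)$ are sampled from an unknown distribution (the $X_i$ may be arbitrarily dependent). For each $i\in[K]$ let $(E_i(\theta))_{\theta\in\Theta_i}$ be a family of e-values (for every $\theta\in\Theta_i$, $E_i(\theta)\ge0$ and $\mathbb{E}[E_i(\theta)]\le1$ whenever $\theta$ is the true value of $\theta_i$), and let $C_i(\alpha)=\{\theta\in\Theta_i: E_i(\theta)<1/\alpha\}$ be the associated marginal e-CIs. Let $\mathcal S$ be any selection rule and $S=\mathcal S(\mathbf X)\subseteq[K]$. The e-BY procedure at level $\delta\in(0,1)$ reports, for each $i\in S$, the interval $C_i(\alpha_i)$ with $\alpha_i=\delta|S|/K$. Then $$\mathrm{FCR}=\mathbb{E}\left[\frac{\sum_{i\in S}\mathbf 1\{\theta_i\notin C_i(\delta|S|/K)\}}{|S|\vee 1}\right]\le\delta .$$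
   Context: $[K]=\{1,\dots,K\}$. The false coverage rate (FCR) is the expectation of the false coverage proportion, the fraction of selected parameters not covered by their reported intervals. *)

theory Defs
  imports "HOL-Probability.Probability"
begin

definition e_CI :: "(nat \<Rightarrow> 'p set) \<Rightarrow> (nat \<Rightarrow> 'p \<Rightarrow> 'w \<Rightarrow> real) \<Rightarrow> nat \<Rightarrow> real \<Rightarrow> 'w \<Rightarrow> 'p set" where
  "e_CI \<Theta> E i \<alpha> \<omega> = {t \<in> \<Theta> i. E i t \<omega> < 1 / \<alpha>}"

definition eBY_FCP :: "(nat \<Rightarrow> 'p set) \<Rightarrow> (nat \<Rightarrow> 'p \<Rightarrow> 'w \<Rightarrow> real) \<Rightarrow> (nat \<Rightarrow> 'p)
    \<Rightarrow> ('w \<Rightarrow> nat set) \<Rightarrow> nat \<Rightarrow> real \<Rightarrow> 'w \<Rightarrow> real" where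
  "eBY_FCP \<Theta> E \<theta> S K \<delta> \<omega> =
     (\<Sum>i\<in>S \<omega>. if \<theta> i \<notin> e_CI \<Theta> E i (\<delta> * real (card (S \<omega>)) / real K) \<omega> then 1 else 0)
     / max (real (card (S \<omega>))) 1"

end

theory Submission
  imports Defs
begin

lemma pointwise:
  fixes K :: nat and \<delta> :: real
  assumes K: "K \<ge> 1" and d: "0 < \<delta>"
    and th: "\<And>i. i \<in> {1..K} \<Longrightarrow> \<theta> i \<in> \<Theta> i"
    and nn: "\<And>i. i \<in> {1..K} \<Longrightarrow> E i (\<theta> i) \<omega> \<ge> 0"
    and Ssub: "S \<omega> \<subseteq> {1..K}"
  shows "eBY_FCP \<Theta> E \<theta> S K \<delta> \<omega> \<le> (\<Sum>i\<in>{1..K}. \<delta> / real K * E i (\<theta> i) \<omega>)"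
proof (cases "S \<omega> = {}")
  case True
  have "0 \<le> (\<Sum>i\<in>{1..K}. \<delta> / real K * E i (\<theta> i) \<omega>)"
    using nn d by (intro sum_nonneg) auto
  then show ?thesis using True by (simp add: eBY_FCP_def)
next
  case False
  have fin: "finite (S \<omega>)" using Ssub finite_subset by blast
  define n where "n = card (S \<omega>)"
  have n1: "real n \<ge> 1" using False fin n_def by (simp add: Suc_le_eq card_gt_0_iff)
  have Kpos: "real K > 0" using K by simp
  have each: "(if \<theta> i \<notin> e_CI \<Theta> E i (\<delta> * real n / real K) \<omega> then 1 else 0) / real n
      \<le> \<delta> / real K * E i (\<theta> i) \<omega>" if i: "i \<in> S \<omega>" for i
  proof -
    have iK: "i \<in> {1..K}" using i Ssub by auto
    show ?thesis
    proof (cases "\<theta> i \<notin> e_CI \<Theta> E i (\<delta> * real n / real K) \<omega>")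
      case True
      then have "E i (\<theta> i) \<omega> \<ge> 1 / (\<delta> * real n / real K)"
        using th[OF iK] by (auto simp: e_CI_def)
      then have "E i (\<theta> i) \<omega> \<ge> real K / (\<delta> * real n)" by simp
      then have "E i (\<theta> i) \<omega> * (\<delta> * real n) \<ge> real K"
        using d n1 by (simp add: pos_divide_le_eq)
      then have "real K / (real K * real n) \<le> E i (\<theta> i) \<omega> * (\<delta> * real n) / (real K * real n)"
        using n1 Kpos by (intro divide_right_mono) auto
      moreover have "real K / (real K * real n) = 1 / real n" using Kpos by simp
      moreover have "E i (\<theta> i) \<omega> * (\<delta> * real n) / (real K * real n) = \<delta> / real K * E i (\<theta> i) \<omega>"
        using n1 by simp
      ultimately have "1 / real n \<le> \<delta> / real K * E i (\<theta> i) \<omega>" by simp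
      then show ?thesis using True by simp
    next
      case False
      then show ?thesis using nn[OF iK] d Kpos by simp
    qed
  qed
  have "eBY_FCP \<Theta> E \<theta> S K \<delta> \<omega> = (\<Sum>i\<in>S \<omega>. (if \<theta> i \<notin> e_CI \<Theta> E i (\<delta> * real n / real K) \<omega> then 1 else 0) / real n)"
    using n1 by (simp add: eBY_FCP_def n_def[symmetric] sum_divide_distrib max_def)
  also have "\<dots> \<le> (\<Sum>i\<in>S \<omega>. \<delta> / real K * E i (\<theta> i) \<omega>)"
    by (rule sum_mono) (rule each)
  also have "\<dots> \<le> (\<Sum>i\<in>{1..K}. \<delta> / real K * E i (\<theta> i) \<omega>)"
    using Ssub nn d Kpos by (intro sum_mono2) auto
  finally show ?thesis .
qed

theorem theorem2:
  fixes M :: "'w measure"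
    and K :: nat
    and \<Theta> :: "nat \<Rightarrow> 'p set"
    and \<theta> :: "nat \<Rightarrow> 'p"
    and E :: "nat \<Rightarrow> 'p \<Rightarrow> 'w \<Rightarrow> real"
    and S :: "'w \<Rightarrow> nat set"
    and \<delta> :: real
  assumes "prob_space M"
    and "K \<ge> 1"
    and "\<And>i. i \<in> {1..K} \<Longrightarrow> \<theta> i \<in> \<Theta> i"
    and "\<And>i t \<omega>. i \<in> {1..K} \<Longrightarrow> t \<in> \<Theta> i \<Longrightarrow> \<omega> \<in> space M \<Longrightarrow> E i t \<omega> \<ge> 0"
    and "\<And>i. i \<in> {1..K} \<Longrightarrow> E i (\<theta> i) \<in> borel_measurable M"
    and "\<And>i. i \<in> {1..K} \<Longrightarrow> (\<integral>\<^sup>+ \<omega>. ennreal (E i (\<theta> i) \<omega>) \<partial>M) \<le> 1"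
    and "\<And>\<omega>. \<omega> \<in> space M \<Longrightarrow> S \<omega> \<subseteq> {1..K}"
    and "\<And>A. {\<omega> \<in> space M. S \<omega> = A} \<in> sets M"
    and "0 < \<delta>" and "\<delta> < 1"
  shows "(\<integral>\<omega>. eBY_FCP \<Theta> E \<theta> S K \<delta> \<omega> \<partial>M) \<le> \<delta>"
proof -
  have Kpos: "real K > 0" using assms(2) by simp
  have intE: "integrable M (E i (\<theta> i))" if i: "i \<in> {1..K}" for i
  proof (rule integrableI_nonneg)
    show "E i (\<theta> i) \<in> borel_measurable M" using assms(5)[OF i] .
    show "AE x in M. 0 \<le> E i (\<theta> i) x" using assms(4)[OF i assms(3)[OF i]] by auto
    show "(\<integral>\<^sup>+ x. ennreal (E i (\<theta> i) x) \<partial>M) < \<infinity>"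
      using assms(6)[OF i] by (simp add: le_less_trans)
  qed
  have intle: "integral\<^sup>L M (E i (\<theta> i)) \<le> 1" if i: "i \<in> {1..K}" for i
  proof -
    have "(\<integral>\<^sup>+ x. ennreal (E i (\<theta> i) x) \<partial>M) = ennreal (integral\<^sup>L M (E i (\<theta> i)))"
      using intE[OF i] assms(4)[OF i assms(3)[OF i]]
      by (intro nn_integral_eq_integral) auto
    then have "ennreal (integral\<^sup>L M (E i (\<theta> i))) \<le> 1" using assms(6)[OF i] by simp
    then show ?thesis by (simp add: ennreal_le_1)
  qed
  let ?g = "\<lambda>\<omega>. (\<Sum>i\<in>{1..K}. \<delta> / real K * E i (\<theta> i) \<omega>)"
  have intg: "integrable M ?g"
  proof (rule Bochner_Integration.integrable_sum)
    fix i assume "i \<in> {1..K}"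
    then show "integrable M (\<lambda>\<omega>. \<delta> / real K * E i (\<theta> i) \<omega>)"
      using intE by (intro Bochner_Integration.integrable_mult_right) blast
  qed
  have ig: "integral\<^sup>L M ?g \<le> \<delta>"
  proof -
    have "integral\<^sup>L M ?g = (\<Sum>i\<in>{1..K}. \<delta> / real K * integral\<^sup>L M (E i (\<theta> i)))"
      using intE by (subst Bochner_Integration.integral_sum) auto
    also have "\<dots> \<le> (\<Sum>i\<in>{1..K}. \<delta> / real K * 1)"
      using intle assms(9) Kpos by (intro sum_mono mult_left_mono) auto
    also have "\<dots> = \<delta>" using Kpos by simp
    finally show ?thesis .
  qed
  show ?thesis
  proof (cases "integrable M (eBY_FCP \<Theta> E \<theta> S K \<delta>)")
    case True
    have "(\<integral>\<omega>. eBY_FCP \<Theta> E \<theta> S K \<delta> \<omega> \<partial>M) \<le> integral\<^sup>L M ?g"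
      using True intg
    proof (rule integral_mono)
      fix \<omega> assume w: "\<omega> \<in> space M"
      show "eBY_FCP \<Theta> E \<theta> S K \<delta> \<omega> \<le> ?g \<omega>"
      proof (rule pointwise[OF assms(2) assms(9)])
        show "\<And>i. i \<in> {1..K} \<Longrightarrow> \<theta> i \<in> \<Theta> i" by (rule assms(3))
        show "\<And>i. i \<in> {1..K} \<Longrightarrow> 0 \<le> E i (\<theta> i) \<omega>"
          using assms(4) assms(3) w by blast
        show "S \<omega> \<subseteq> {1..K}" by (rule assms(7)[OF w])
      qed
    qed
    then show ?thesis using ig by linarith
  next
    case False
    then show ?thesis using Bochner_Integration.not_integrable_integral_eq[OF False] assms(9) by simp
  qed
qed

end
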